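(* Let $k>1$ and let $f$ be a positive differentiable function on $[0,1]$ such that $f$ is constant or $f$ is non-increasing. Consider the planar system $$\frac{dI}{d\tau}=I\,[f(R)(1-I-R)-k],\qquad \frac{dR}{d\tau}=(k-1)I-R.$$ If $f(0)/k<1$, then the system has no endemic equilibrium points. If $f(0)/k>1$, then the system has a unique endemic equilibrium point, and this endemic equilibrium point is locally stable.
   Context: An endemic equilibrium is an equilibrium point $(I^*,R^* )$ of the system with $I^*>0$. "Locally stable" means locally asymptotically stable (both eigenvalues of the Jacobian at the point have negative real part). *)

theory Defs
  imports Complex_Main
begin

definition endemic_eq :: "(real \<Rightarrow> real) \<Rightarrow> real \<Rightarrow> real \<Rightarrow> real \<Rightarrow> bool" where
  "endemic_eq f k I R \<longleftrightarrow>
     I > 0 \<and> 0 \<le> R \<and> R \<le> 1 \<and>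
     I * (f R * (1 - I - R) - k) = 0 \<and> (k - 1) * I - R = 0"

text \<open>Jacobian of the vector field at (I,R), where f' is the derivative of f.\<close>
definition jac11 :: "(real \<Rightarrow> real) \<Rightarrow> real \<Rightarrow> real \<Rightarrow> real \<Rightarrow> real" where
  "jac11 f k I R = f R * (1 - I - R) - k - I * f R"
definition jac12 :: "(real \<Rightarrow> real) \<Rightarrow> (real \<Rightarrow> real) \<Rightarrow> real \<Rightarrow> real \<Rightarrow> real" where
  "jac12 f f' I R = I * (f' R * (1 - I - R) - f R)"
definition jac21 :: "real \<Rightarrow> real" where
  "jac21 k = k - 1"
definition jac22 :: real where
  "jac22 = -1"

text \<open>Locally asymptotically stable: every (complex) eigenvalue of the Jacobian,
  i.e. every root of det(lambda*Id - J) = 0, has negative real part.\<close>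
definition locally_stable ::
  "(real \<Rightarrow> real) \<Rightarrow> (real \<Rightarrow> real) \<Rightarrow> real \<Rightarrow> real \<Rightarrow> real \<Rightarrow> bool" where
  "locally_stable f f' k I R \<longleftrightarrow>
     (\<forall>z::complex.
        (z - of_real (jac11 f k I R)) * (z - of_real jac22)
          - of_real (jac12 f f' I R) * of_real (jac21 k) = 0
        \<longrightarrow> Re z < 0)"

end

theory Submission imports Defs begin
lemma deriv_nonpos:
  fixes f :: "real \<Rightarrow> real"
  assumes mono: "\<forall>x y. 0 \<le> x \<longrightarrow> x \<le> y \<longrightarrow> y \<le> 1 \<longrightarrow> f y \<le> f x"
    and x: "x \<in> {0..1}" and d: "(f has_real_derivative D) (at x within {0..1})"
  shows "D \<le> 0"
proof -
  have lim: "((\<lambda>y. (f y - f x) / (y - x)) \<longlongrightarrow> D) (at x within {0..1})"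
    using d by (simp add: has_field_derivative_iff)
  have ev: "eventually (\<lambda>y. (f y - f x) / (y - x) \<le> 0) (at x within {0..1})"
    unfolding eventually_at_filter
  proof (rule always_eventually, intro allI impI)
    fix y assume "y \<noteq> x" "y \<in> {0..(1::real)}"
    show "(f y - f x) / (y - x) \<le> 0"
    proof (cases "y < x")
      case True
      then have "f y - f x \<ge> 0" using mono x \<open>y \<in> {0..1}\<close> by auto
      then show ?thesis using True by (simp add: divide_nonneg_neg)
    next
      case False
      then have "y > x" using \<open>y \<noteq> x\<close> by simp
      then have "f y - f x \<le> 0" using mono x \<open>y \<in> {0..1}\<close> by auto
      then show ?thesis using \<open>y > x\<close> by (simp add: divide_nonpos_pos)
    qed
  qed
  have nb: "at x within {0..1::real} \<noteq> bot"
  proof -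
    consider "x = 0" | "x = 1" | "0 < x \<and> x < 1" using x by fastforce
    then show ?thesis
    proof cases
      case 1 then show ?thesis by (simp add: at_within_Icc_at_right)
    next
      case 2 then show ?thesis using at_within_Icc_at_left[of "0::real" 1] by simp
    next
      case 3 then show ?thesis by (simp add: at_within_Icc_at)
    qed
  qed
  show ?thesis by (rule tendsto_upperbound[OF lim ev nb])
qed

lemma re_neg:
  fixes z :: complex and a b c d :: real
  assumes "a < 0" "d < 0" "b * c < 0"
    and eq: "(z - of_real a) * (z - of_real d) - of_real b * of_real c = 0"
  shows "Re z < 0"
proof -
  have r: "(Re z - a) * (Re z - d) - Im z * Im z - b * c = 0"
    using arg_cong[OF eq, of Re] by simp
  have i: "Im z * (2 * Re z - a - d) = 0"
    using arg_cong[OF eq, of Im] by (simp add: algebra_simps)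
  show ?thesis
  proof (cases "Im z = 0")
    case True
    then have "(Re z - a) * (Re z - d) < 0" using r assms by simp
    then show ?thesis using assms
      by (metis mult_nonneg_nonneg linorder_not_le le_less_trans mult_nonpos_nonpos diff_ge_0_iff_ge diff_le_0_iff_le linorder_le_cases not_less)
  next
    case False
    then have "2 * Re z - a - d = 0" using i by simp
    then show ?thesis using assms by linarith
  qed
qed

lemma eq_facts:
  assumes k: "k > 1" and pos: "\<forall>x\<in>{0..1}. f x > 0" and e: "endemic_eq f k I R"
  shows "I > 0" "R = (k - 1) * I" "R > 0" "R \<le> 1" "f R * (1 - I - R) = k" "1 - I - R > 0" "f R > 0"
proof -
  show i: "I > 0" "R = (k - 1) * I" "R \<le> 1" using e by (auto simp: endemic_eq_def)
  then show r: "R > 0" using k by simp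
  show fe: "f R * (1 - I - R) = k" using e i by (auto simp: endemic_eq_def)
  show fp: "f R > 0" using pos r i by auto
  show "1 - I - R > 0" using fe fp k by (metis zero_less_mult_pos order.strict_trans zero_less_one)
qed

theorem proposition2:
  fixes f f' :: "real \<Rightarrow> real" and k :: real
  assumes k: "k > 1"
    and pos: "\<forall>x\<in>{0..1}. f x > 0"
    and deriv: "\<forall>x\<in>{0..1}. (f has_real_derivative f' x) (at x within {0..1})"
    and shape: "(\<forall>x\<in>{0..1}. f x = f 0) \<or>
                (\<forall>x y. 0 \<le> x \<longrightarrow> x \<le> y \<longrightarrow> y \<le> 1 \<longrightarrow> f y \<le> f x)"
  shows "(f 0 / k < 1 \<longrightarrow> \<not> (\<exists>I R. endemic_eq f k I R)) \<and>
         (f 0 / k > 1 \<longrightarrow>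
            (\<exists>!p. endemic_eq f k (fst p) (snd p)) \<and>
            (\<forall>I R. endemic_eq f k I R \<longrightarrow> locally_stable f f' k I R))"
proof -
  have mono: "\<forall>x y. 0 \<le> x \<longrightarrow> x \<le> y \<longrightarrow> y \<le> 1 \<longrightarrow> f y \<le> f x"
    using shape by (metis atLeastAtMost_iff order.trans order_refl)
  have kp: "k > 0" using k by simp
  have P1: "\<not> (\<exists>I R. endemic_eq f k I R)" if f0: "f 0 / k < 1"
  proof
    assume "\<exists>I R. endemic_eq f k I R"
    then obtain I R where e: "endemic_eq f k I R" by blast
    note E = eq_facts[OF k pos e]
    have "f 0 < k" using f0 kp by (simp add: divide_less_eq)
    have "f R \<le> f 0" using mono E by auto
    have "f R * (1 - I - R) < f R * 1"
      using E by (intro mult_strict_left_mono) auto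
    then show False using E \<open>f R \<le> f 0\<close> \<open>f 0 < k\<close> by linarith
  qed
  have uniq_le: "R1 = R2" if e1: "endemic_eq f k I1 R1" and e2: "endemic_eq f k I2 R2" and le: "R1 \<le> R2"
    for I1 R1 I2 R2
  proof (rule ccontr)
    assume "R1 \<noteq> R2"
    then have lt: "R1 < R2" using le by simp
    note A = eq_facts[OF k pos e1] and B = eq_facts[OF k pos e2]
    have "I1 < I2" using lt A(2) B(2) k by (metis mult_less_cancel_left_pos diff_gt_0_iff_gt)
    then have h: "1 - I1 - R1 > 1 - I2 - R2" using lt by simp
    have fm: "f R2 \<le> f R1" using mono A B le by auto
    have "f R1 * (1 - I2 - R2) < f R1 * (1 - I1 - R1)"
      using h A(7) by (intro mult_strict_left_mono) auto
    moreover have "f R2 * (1 - I2 - R2) \<le> f R1 * (1 - I2 - R2)"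
      using fm B(6) by (intro mult_right_mono) auto
    ultimately show False using A(5) B(5) by linarith
  qed
  have P2: "(\<exists>!p. endemic_eq f k (fst p) (snd p))" if f0: "f 0 / k > 1"
  proof -
    have "f 0 > k" using f0 kp by (simp add: less_divide_eq)
    define g where "g = (\<lambda>R. f R * (1 - R * k / (k - 1)) - k)"
    define b where "b = (k - 1) / k"
    have b01: "0 < b" "b < 1" using k by (auto simp: b_def divide_less_eq)
    have cf: "continuous_on {0..1} f"
      by (rule DERIV_continuous_on) (use deriv in auto)
    have cg: "continuous_on {0..b} g"
      unfolding g_def
      by (intro continuous_intros continuous_on_subset[OF cf]) (use b01 k in auto)
    have gb: "g b = - k" using k by (simp add: g_def b_def)
    have g0: "g 0 = f 0 - k" by (simp add: g_def)
    obtain r where r: "0 \<le> r" "r \<le> b" "g r = 0"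
      using IVT2'[of g b 0 0, OF _ _ _ cg] gb g0 \<open>f 0 > k\<close> b01 kp by auto
    have "r \<noteq> 0" using r g0 \<open>f 0 > k\<close> by auto
    then have rp: "r > 0" using r by simp
    have e: "endemic_eq f k (r / (k - 1)) r"
    proof -
      have h: "1 - r / (k - 1) - r = 1 - r * k / (k - 1)" using k by (simp add: field_simps)
      have fr: "f r * (1 - r / (k - 1) - r) = k" unfolding h using r(3) by (simp add: g_def)
      show ?thesis unfolding endemic_eq_def using fr r rp k b01 by auto
    qed
    show ?thesis
    proof (rule ex1I[of _ "(r / (k - 1), r)"])
      show "endemic_eq f k (fst (r / (k - 1), r)) (snd (r / (k - 1), r))" using e by simp
    next
      fix p assume ep: "endemic_eq f k (fst p) (snd p)"
      have "snd p = r" using uniq_le[OF ep e] uniq_le[OF e ep] by linarith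
      moreover have "snd p = (k - 1) * fst p" using eq_facts(2)[OF k pos ep] .
      ultimately have "fst p = r / (k - 1)" using k by (simp add: field_simps)
      then show "p = (r / (k - 1), r)" using \<open>snd p = r\<close> by (simp add: prod_eq_iff)
    qed
  qed
  have P3: "locally_stable f f' k I R" if e: "endemic_eq f k I R" for I R
  proof -
    note E = eq_facts[OF k pos e]
    have R01: "R \<in> {0..1}" using E by auto
    have fd: "f' R \<le> 0" using deriv_nonpos[OF mono R01] deriv R01 by auto
    have a: "jac11 f k I R < 0"
      using E by (simp add: jac11_def)
    have "f' R * (1 - I - R) \<le> 0" using fd E(6) by (simp add: mult_nonpos_nonneg)
    then have "f' R * (1 - I - R) - f R < 0" using E(7) by linarith
    then have bneg: "jac12 f f' I R < 0" using E(1) by (simp add: jac12_def mult_pos_neg)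
    have "jac12 f f' I R * jac21 k < 0" using bneg k by (simp add: jac21_def mult_neg_pos)
    then show ?thesis unfolding locally_stable_def
    proof (intro allI impI)
      fix z :: complex
      assume bc: "jac12 f f' I R * jac21 k < 0"
        and eq: "(z - of_real (jac11 f k I R)) * (z - of_real jac22) - of_real (jac12 f f' I R) * of_real (jac21 k) = 0"
      show "Re z < 0" by (rule re_neg[OF a _ bc eq]) (simp add: jac22_def)
    qed
  qed
  show ?thesis using P1 P2 P3 by blast
qed

end
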